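(* $\mathfrak{L}(\mathrm{rtDVA}(2))\not\subseteq\bigcup_{k}\mathfrak{L}(\mathrm{rtD}k\mathrm{CA})$.
   Context: $\mathfrak{L}(A)$ denotes the class of languages recognized by machines of type $A$. A real-time deterministic vector automaton of dimension $k$ ($\mathrm{rtDVA}(k)$) is a 6-tuple $(Q,\Sigma,\delta,q_0,Q_a,v)$ with finite state set $Q$, initial state $q_0$, accept states $Q_a$, initial row vector $v\in\mathbb{Q}^k$ (freely chosen), and $\delta:Q\times(\Sigma\cup\{\cent,\$\})\times\{=,\neq\}\to Q\times S$, $S$ the set of $k\times k$ rational matrices. The input $w$ is read as $\cent w\$$ left to right, one symbol per step; in state $q$ reading $\sigma$, with $\omega$ equal to "$=$" iff the first vector entry equals $1$, if $\delta(q,\sigma,\omega)=(q',M)$ the machine goes to $q'$ and multiplies its row vector on the right by $M$. Acceptance: after processing $\$$, the state is in $Q_a$ and the first vector entry equals $1$. A real-time deterministic $k$-counter automaton (rtD$k$CA) is a 5-tuple $(Q,\Sigma,\delta,q_0,Q_a)$ with $k$ integer counters initially $0$, reading $\cent w\$$ one symbol per step; $\delta(q,\sigma,\theta)=(q',c)$ with $\theta\in\{0,\pm\}^k$ the zero/nonzero status of each counter and $c\in\{-1,0,1\}^k$ the counter increments; acceptance iff in an accept state after scanning $\$$. The union ranges over all $k\ge1$. *)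

theory Defs
  imports Complex_Main
begin

datatype 's tsym = Cent | Dollar | Sym 's

definition tape :: "'s list \<Rightarrow> 's tsym list" where
  "tape w = Cent # map Sym w @ [Dollar]"

definition tape_alphabet :: "'s set \<Rightarrow> 's tsym set" where
  "tape_alphabet \<Sigma> = Sym ` \<Sigma> \<union> {Cent, Dollar}"

text \<open>Row vectors in Q^k are functions nat => rat (only indices < k matter);
  k x k rational matrices are functions nat => nat => rat (only indices < k matter).
  The vector entry with index 0 is the "first entry".\<close>

definition vec_mat_mult :: "nat \<Rightarrow> (nat \<Rightarrow> rat) \<Rightarrow> (nat \<Rightarrow> nat \<Rightarrow> rat) \<Rightarrow> (nat \<Rightarrow> rat)" where
  "vec_mat_mult k v M = (\<lambda>j. \<Sum>i<k. v i * M i j)"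

definition dva_step ::
  "nat \<Rightarrow> (nat \<Rightarrow> 's tsym \<Rightarrow> bool \<Rightarrow> nat \<times> (nat \<Rightarrow> nat \<Rightarrow> rat)) \<Rightarrow>
   nat \<times> (nat \<Rightarrow> rat) \<Rightarrow> 's tsym \<Rightarrow> nat \<times> (nat \<Rightarrow> rat)" where
  "dva_step k \<delta> c \<sigma> =
     (let (q, v) = c; (q', M) = \<delta> q \<sigma> (v 0 = 1) in (q', vec_mat_mult k v M))"

definition rtDVA ::
  "nat \<Rightarrow> 's set \<Rightarrow> nat set \<Rightarrow> (nat \<Rightarrow> 's tsym \<Rightarrow> bool \<Rightarrow> nat \<times> (nat \<Rightarrow> nat \<Rightarrow> rat)) \<Rightarrow>
   nat \<Rightarrow> nat set \<Rightarrow> bool" where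
  "rtDVA k \<Sigma> Q \<delta> q0 Qa \<longleftrightarrow> finite Q \<and> q0 \<in> Q \<and> Qa \<subseteq> Q \<and>
     (\<forall>q\<in>Q. \<forall>\<sigma>\<in>tape_alphabet \<Sigma>. \<forall>\<omega>. fst (\<delta> q \<sigma> \<omega>) \<in> Q)"

definition dva_accepts ::
  "nat \<Rightarrow> (nat \<Rightarrow> 's tsym \<Rightarrow> bool \<Rightarrow> nat \<times> (nat \<Rightarrow> nat \<Rightarrow> rat)) \<Rightarrow>
   nat \<Rightarrow> nat set \<Rightarrow> (nat \<Rightarrow> rat) \<Rightarrow> 's list \<Rightarrow> bool" where
  "dva_accepts k \<delta> q0 Qa v w =
     (let (q, u) = foldl (dva_step k \<delta>) (q0, v) (tape w) in q \<in> Qa \<and> u 0 = 1)"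

definition rtDVA_langs :: "nat \<Rightarrow> 's set \<Rightarrow> 's list set set" where
  "rtDVA_langs k \<Sigma> = {L. \<exists>Q \<delta> q0 Qa v. rtDVA k \<Sigma> Q \<delta> q0 Qa \<and>
      L = {w \<in> lists \<Sigma>. dva_accepts k \<delta> q0 Qa v w}}"

text \<open>Counters are functions nat => int (only indices < k are counters).\<close>

definition ca_status :: "nat \<Rightarrow> (nat \<Rightarrow> int) \<Rightarrow> (nat \<Rightarrow> bool)" where
  "ca_status k c = (\<lambda>i. i < k \<and> c i \<noteq> 0)"

definition ca_step ::
  "nat \<Rightarrow> (nat \<Rightarrow> 's tsym \<Rightarrow> (nat \<Rightarrow> bool) \<Rightarrow> nat \<times> (nat \<Rightarrow> int)) \<Rightarrow>
   nat \<times> (nat \<Rightarrow> int) \<Rightarrow> 's tsym \<Rightarrow> nat \<times> (nat \<Rightarrow> int)" where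
  "ca_step k \<delta> s \<sigma> =
     (let (q, c) = s; (q', d) = \<delta> q \<sigma> (ca_status k c)
      in (q', \<lambda>i. if i < k then c i + d i else c i))"

definition rtDkCA ::
  "nat \<Rightarrow> 's set \<Rightarrow> nat set \<Rightarrow> (nat \<Rightarrow> 's tsym \<Rightarrow> (nat \<Rightarrow> bool) \<Rightarrow> nat \<times> (nat \<Rightarrow> int)) \<Rightarrow>
   nat \<Rightarrow> nat set \<Rightarrow> bool" where
  "rtDkCA k \<Sigma> Q \<delta> q0 Qa \<longleftrightarrow> finite Q \<and> q0 \<in> Q \<and> Qa \<subseteq> Q \<and>
     (\<forall>q\<in>Q. \<forall>\<sigma>\<in>tape_alphabet \<Sigma>. \<forall>\<theta>.
        fst (\<delta> q \<sigma> \<theta>) \<in> Q \<and> (\<forall>i<k. snd (\<delta> q \<sigma> \<theta>) i \<in> {-1, 0, 1}))"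

definition ca_accepts ::
  "nat \<Rightarrow> (nat \<Rightarrow> 's tsym \<Rightarrow> (nat \<Rightarrow> bool) \<Rightarrow> nat \<times> (nat \<Rightarrow> int)) \<Rightarrow>
   nat \<Rightarrow> nat set \<Rightarrow> 's list \<Rightarrow> bool" where
  "ca_accepts k \<delta> q0 Qa w = (fst (foldl (ca_step k \<delta>) (q0, \<lambda>_. 0) (tape w)) \<in> Qa)"

definition rtDkCA_langs :: "nat \<Rightarrow> 's set \<Rightarrow> 's list set set" where
  "rtDkCA_langs k \<Sigma> = {L. \<exists>Q \<delta> q0 Qa. rtDkCA k \<Sigma> Q \<delta> q0 Qa \<and>
      L = {w \<in> lists \<Sigma>. ca_accepts k \<delta> q0 Qa w}}"

end

theory Submission
  imports Defs "HOL-Real_Asymp.Real_Asymp"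
begin

section \<open>Growth\<close>

lemma exists_big:
  fixes C k :: nat
  shows "\<exists>m. C * (2*m+5)^k < (2::nat)^m"
proof -
  have "((\<lambda>m::nat. real C * (2*real m+5)^k / 2^m) \<longlongrightarrow> 0) at_top"
    by real_asymp
  then have "eventually (\<lambda>m. real C * (2*real m+5)^k / 2^m < 1) at_top"
    by (rule order_tendstoD) simp
  then obtain m where "real C * (2*real m+5)^k / 2^m < 1"
    by (auto simp: eventually_at_top_linorder)
  then have "real C * (2*real m+5)^k < 2^m" by (simp add: field_simps)
  then have "real (C * (2*m+5)^k) < real ((2::nat)^m)" by simp
  then show ?thesis by (intro exI[of _ m]) linarith
qed

section \<open>Binary encoding\<close>

definition pushq :: "rat \<Rightarrow> nat list \<Rightarrow> rat" where
  "pushq x u = foldl (\<lambda>x a. 2*x + of_nat a) x u"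

definition popq :: "rat \<Rightarrow> nat list \<Rightarrow> rat" where
  "popq x u = foldl (\<lambda>x a. (x - of_nat a)/2) x u"

definition pn :: "nat list \<Rightarrow> nat" where
  "pn u = foldl (\<lambda>x a. 2*x + a) 1 u"

lemma pushq_snoc: "pushq x (u @ [a]) = 2 * pushq x u + of_nat a"
  by (simp add: pushq_def)

lemma pn_snoc: "pn (u @ [a]) = 2 * pn u + a"
  by (simp add: pn_def)

lemma pushq_pn: "pushq 1 u = of_nat (pn u)"
  by (induction u rule: rev_induct) (simp_all add: pushq_def pn_def)

lemma pn_pos: "pn u \<ge> 1"
  by (induction u rule: rev_induct) (simp_all add: pn_snoc pn_def)

lemma popq_iff: "popq x v = y \<longleftrightarrow> x = pushq y (rev v)"
proof (induction v arbitrary: x)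
  case Nil then show ?case by (simp add: popq_def pushq_def)
next
  case (Cons a v)
  have "popq x (a # v) = popq ((x - of_nat a)/2) v" by (simp add: popq_def)
  also have "\<dots> = y \<longleftrightarrow> (x - of_nat a)/2 = pushq y (rev v)" using Cons by simp
  also have "\<dots> \<longleftrightarrow> x = pushq y (rev (a # v))" by (auto simp: pushq_snoc field_simps)
  finally show ?case .
qed

lemma pn_inj: "set u \<subseteq> {0,1} \<Longrightarrow> set w \<subseteq> {0,1} \<Longrightarrow> pn u = pn w \<Longrightarrow> u = w"
proof (induction u arbitrary: w rule: rev_induct)
  case Nil
  show ?case
  proof (cases w rule: rev_cases)
    case Nil then show ?thesis by simp
  next
    case (snoc w' b)
    with Nil have "1 = 2 * pn w' + b" by (simp add: pn_snoc pn_def)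
    moreover have "pn w' \<ge> 1" by (rule pn_pos)
    ultimately show ?thesis by simp
  qed
next
  case (snoc a u)
  show ?case
  proof (cases w rule: rev_cases)
    case Nil
    with snoc have "2 * pn u + a = 1" by (simp add: pn_snoc pn_def)
    moreover have "pn u \<ge> 1" by (rule pn_pos)
    ultimately show ?thesis by simp
  next
    case snoc2: (snoc w' b)
    from snoc.prems snoc2 have ab: "a \<in> {0,1}" "b \<in> {0,1}" by auto
    from snoc.prems snoc2 have eq: "2 * pn u + a = 2 * pn w' + b" by (simp add: pn_snoc)
    from ab eq have "a = b" by auto presburger+
    with eq have "pn u = pn w'" by simp
    with snoc.IH[of w'] snoc.prems snoc2 have "u = w'" by auto
    with \<open>a = b\<close> snoc2 show ?thesis by simp
  qed
qed

lemma pushq_inj: "set u \<subseteq> {0,1} \<Longrightarrow> set w \<subseteq> {0,1} \<Longrightarrow> pushq 1 u = pushq 1 w \<Longrightarrow> u = w"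
  using pn_inj by (simp add: pushq_pn)

section \<open>The vector automaton\<close>

definition Mid :: "nat \<Rightarrow> nat \<Rightarrow> rat" where "Mid i j = (if i = j then 1 else 0)"
definition Mpush :: "nat \<Rightarrow> nat \<Rightarrow> nat \<Rightarrow> rat" where
  "Mpush a i j = (if i=0 \<and> j=0 then 2 else if i=1 \<and> j=0 then of_nat a else if i=1 \<and> j=1 then 1 else 0)"
definition Mpop :: "nat \<Rightarrow> nat \<Rightarrow> nat \<Rightarrow> rat" where
  "Mpop a i j = (if i=0 \<and> j=0 then 1/2 else if i=1 \<and> j=0 then -(of_nat a)/2 else if i=1 \<and> j=1 then 1 else 0)"

definition dl :: "nat \<Rightarrow> nat tsym \<Rightarrow> bool \<Rightarrow> nat \<times> (nat \<Rightarrow> nat \<Rightarrow> rat)" where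
  "dl q \<sigma> \<omega> = (case \<sigma> of Sym a \<Rightarrow>
      (if q = 0 \<and> a \<le> 1 then (0, Mpush a) else if q = 0 \<and> a = 2 then (1, Mid)
       else if q = 1 \<and> a \<le> 1 then (1, Mpop a) else (2, Mid))
    | _ \<Rightarrow> (q, Mid))"

lemma vmm2: "vec_mat_mult 2 v M j = v 0 * M 0 j + v 1 * M 1 j"
  by (simp add: vec_mat_mult_def numeral_2_eq_2)

lemma run_push:
  "set u \<subseteq> {0,1} \<Longrightarrow> v 1 = 1 \<Longrightarrow> foldl (dva_step 2 dl) (0, v) (map Sym u) = (q', v') \<Longrightarrow>
     q' = 0 \<and> v' 0 = pushq (v 0) u \<and> v' 1 = v 1"
proof (induction u arbitrary: v)
  case Nil then show ?case by (simp add: pushq_def)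
next
  case (Cons a u)
  let ?w = "vec_mat_mult 2 v (Mpush a)"
  from Cons.prems have a: "a \<le> 1" by auto
  have "dva_step 2 dl (0, v) (Sym a) = (0, ?w)" using a by (simp add: dva_step_def dl_def)
  with Cons.prems have "foldl (dva_step 2 dl) (0, ?w) (map Sym u) = (q', v')" by simp
  moreover have "?w 0 = 2 * v 0 + of_nat a" "?w 1 = v 1" using Cons.prems by (simp_all add: vmm2 Mpush_def)
  ultimately have "q' = 0 \<and> v' 0 = pushq (?w 0) u \<and> v' 1 = ?w 1" using Cons.IH Cons.prems by auto
  moreover have "?w 0 = 2 * v 0 + of_nat a" "?w 1 = v 1" using Cons.prems by (simp_all add: vmm2 Mpush_def)
  ultimately show ?case by (simp add: pushq_def)
qed

lemma run_pop:
  "set u \<subseteq> {0,1} \<Longrightarrow> v 1 = 1 \<Longrightarrow> foldl (dva_step 2 dl) (1, v) (map Sym u) = (q', v') \<Longrightarrow>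
     q' = 1 \<and> v' 0 = popq (v 0) u \<and> v' 1 = v 1"
proof (induction u arbitrary: v)
  case Nil then show ?case by (simp add: popq_def)
next
  case (Cons a u)
  let ?w = "vec_mat_mult 2 v (Mpop a)"
  from Cons.prems have a: "a \<le> 1" by auto
  have "dva_step 2 dl (1, v) (Sym a) = (1, ?w)" using a by (simp add: dva_step_def dl_def)
  with Cons.prems have "foldl (dva_step 2 dl) (1, ?w) (map Sym u) = (q', v')" by simp
  moreover have "?w 0 = (v 0 - of_nat a)/2" "?w 1 = v 1" using Cons.prems by (simp_all add: vmm2 Mpop_def field_simps)
  ultimately have "q' = 1 \<and> v' 0 = popq (?w 0) u \<and> v' 1 = ?w 1" using Cons.IH Cons.prems by auto
  moreover have "?w 0 = (v 0 - of_nat a)/2" "?w 1 = v 1" using Cons.prems by (simp_all add: vmm2 Mpop_def field_simps)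
  ultimately show ?case by (simp add: popq_def)
qed

lemma run_dead: "foldl (dva_step 2 dl) (2, v) (map Sym u) = (q', v') \<Longrightarrow> q' = 2"
proof (induction u arbitrary: v)
  case Nil then show ?case by simp
next
  case (Cons a u)
  have "dva_step 2 dl (2, v) (Sym a) = (2, vec_mat_mult 2 v Mid)" by (simp add: dva_step_def dl_def)
  with Cons show ?case by auto
qed

lemma dollar_step: "dva_step 2 dl (q, v) Dollar = (q, vec_mat_mult 2 v Mid)"
  by (simp add: dva_step_def dl_def)
lemma cent_step: "dva_step 2 dl (q, v) Cent = (q, vec_mat_mult 2 v Mid)"
  by (simp add: dva_step_def dl_def)
lemma mid0: "vec_mat_mult 2 v Mid 0 = v 0" and mid1: "vec_mat_mult 2 v Mid 1 = v 1"
  by (simp_all add: vmm2 Mid_def)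

definition LL :: "nat list set" where
  "LL = {w. \<exists>u. set u \<subseteq> {0,1} \<and> w = u @ [2] @ rev u}"

lemma split_first:
  "x \<notin> set u \<Longrightarrow> x \<notin> set u' \<Longrightarrow> u @ x # v = u' @ x # v' \<Longrightarrow> u = u' \<and> v = v'"
proof (induction u arbitrary: u')
  case Nil then show ?case by (cases u') auto
next
  case (Cons a u) then show ?case by (cases u') auto
qed

definition v1 :: "nat \<Rightarrow> rat" where "v1 = (\<lambda>_. 1)"

lemma accepts_iff:
  assumes w: "w \<in> lists {0,1,2}"
  shows "dva_accepts 2 dl 0 {1} v1 w \<longleftrightarrow> w \<in> LL"
proof (cases "2 \<in> set w")
  case False
  then have su: "set w \<subseteq> {0,1}" using w by auto
  obtain q' v' where r: "foldl (dva_step 2 dl) (0, vec_mat_mult 2 v1 Mid) (map Sym w) = (q', v')"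
    by (metis surj_pair)
  from run_push[OF su _ r] have "q' = 0" by (simp add: vmm2 Mid_def v1_def)
  then have "\<not> dva_accepts 2 dl 0 {1} v1 w"
    using r by (simp add: dva_accepts_def tape_def cent_step dollar_step)
  moreover have "w \<notin> LL" using False by (auto simp: LL_def)
  ultimately show ?thesis by simp
next
  case True
  then obtain u v where wuv: "w = u @ 2 # v" and nu: "2 \<notin> set u"
    by (metis split_list_first)
  have su: "set u \<subseteq> {0,1}" using w nu wuv by auto
  obtain q1 x1 where r1: "foldl (dva_step 2 dl) (0, vec_mat_mult 2 v1 Mid) (map Sym u) = (q1, x1)"
    by (metis surj_pair)
  from run_push[OF su _ r1] have h1: "q1 = 0" "x1 0 = pushq 1 u" "x1 1 = 1"
    by (simp_all add: vmm2 Mid_def v1_def)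
  have s2: "dva_step 2 dl (q1, x1) (Sym 2) = (1, vec_mat_mult 2 x1 Mid)"
    using h1 by (simp add: dva_step_def dl_def)
  let ?x2 = "vec_mat_mult 2 x1 Mid"
  have tp: "foldl (dva_step 2 dl) (0, v1) (tape w) =
     dva_step 2 dl (foldl (dva_step 2 dl) (1, ?x2) (map Sym v)) Dollar"
    using r1 s2 by (simp add: tape_def wuv cent_step)
  show ?thesis
  proof (cases "2 \<in> set v")
    case True
    then obtain v0 v2 where vv: "v = v0 @ 2 # v2" and nv: "2 \<notin> set v0"
      by (metis split_list_first)
    have sv: "set v0 \<subseteq> {0,1}" using w nv wuv vv by auto
    obtain q3 x3 where r3: "foldl (dva_step 2 dl) (1, ?x2) (map Sym v0) = (q3, x3)"
      by (metis surj_pair)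
    from run_pop[OF sv _ r3] h1 have "q3 = 1" by (simp add: vmm2 Mid_def)
    then have s4: "dva_step 2 dl (q3, x3) (Sym 2) = (2, vec_mat_mult 2 x3 Mid)"
      by (simp add: dva_step_def dl_def)
    obtain q5 x5 where r5: "foldl (dva_step 2 dl) (2, vec_mat_mult 2 x3 Mid) (map Sym v2) = (q5, x5)"
      by (metis surj_pair)
    from run_dead[OF r5] have "q5 = 2" .
    then have "\<not> dva_accepts 2 dl 0 {1} v1 w"
      using tp r3 s4 r5 vv by (simp add: dva_accepts_def dollar_step)
    moreover have "w \<notin> LL"
    proof
      assume "w \<in> LL"
      then obtain u' where u': "set u' \<subseteq> {0,1}" "w = u' @ [2] @ rev u'" by (auto simp: LL_def)
      then have "u' @ 2 # rev u' = u @ 2 # v" using wuv by simp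
      moreover have "2 \<notin> set u'" using u'(1) by auto
      ultimately have "v = rev u'" using split_first[OF _ nu] by metis
      with u'(1) True show False by auto
    qed
    ultimately show ?thesis by simp
  next
    case False
    then have sv: "set v \<subseteq> {0,1}" using w wuv by auto
    obtain q3 x3 where r3: "foldl (dva_step 2 dl) (1, ?x2) (map Sym v) = (q3, x3)"
      by (metis surj_pair)
    from run_pop[OF sv _ r3] h1 have h3: "q3 = 1" "x3 0 = popq (pushq 1 u) v"
      by (simp_all add: vmm2 Mid_def)
    have "dva_accepts 2 dl 0 {1} v1 w \<longleftrightarrow> popq (pushq 1 u) v = 1"
      using tp r3 h3 by (simp add: dva_accepts_def dollar_step mid0)
    also have "\<dots> \<longleftrightarrow> v = rev u"
      using popq_iff pushq_inj[OF su] sv by (metis rev_rev_ident set_rev)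
    also have "\<dots> \<longleftrightarrow> w \<in> LL"
    proof
      assume "v = rev u" then show "w \<in> LL" using su wuv by (auto simp: LL_def)
    next
      assume "w \<in> LL"
      then obtain u' where u': "set u' \<subseteq> {0,1}" "w = u' @ [2] @ rev u'" by (auto simp: LL_def)
      then have "u' @ 2 # rev u' = u @ 2 # v" using wuv by simp
      moreover have "2 \<notin> set u'" using u'(1) by auto
      ultimately show "v = rev u" using split_first[OF _ nu] by (metis rev_rev_ident)
    qed
    finally show ?thesis .
  qed
qed

lemma LL_in: "LL \<in> rtDVA_langs 2 {0,1,2}"
proof -
  have "rtDVA 2 {0,1,2} {0,1,2} dl 0 {1}"
    by (auto simp: rtDVA_def dl_def tape_alphabet_def split: tsym.splits)
  moreover have "LL = {w \<in> lists {0,1,2}. dva_accepts 2 dl 0 {1} v1 w}"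
  proof -
    have "\<And>w. w \<in> LL \<Longrightarrow> w \<in> lists {0,1,2}" by (auto simp: LL_def)
    then show ?thesis using accepts_iff by blast
  qed
  ultimately show ?thesis unfolding rtDVA_langs_def by blast
qed

section \<open>Counter automata\<close>

lemma ca_invariant:
  assumes A: "rtDkCA k \<Sigma> Q \<delta> q0 Qa"
  shows "set xs \<subseteq> tape_alphabet \<Sigma> \<Longrightarrow> q \<in> Q \<Longrightarrow> (\<forall>i<k. \<bar>c i\<bar> \<le> int n) \<Longrightarrow> (\<forall>i\<ge>k. c i = 0) \<Longrightarrow>
    foldl (ca_step k \<delta>) (q, c) xs = (q', c') \<Longrightarrow>
    q' \<in> Q \<and> (\<forall>i<k. \<bar>c' i\<bar> \<le> int (n + length xs)) \<and> (\<forall>i\<ge>k. c' i = 0)"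
proof (induction xs arbitrary: q c n)
  case Nil then show ?case by auto
next
  case (Cons x xs)
  obtain p d where pd: "\<delta> q x (ca_status k c) = (p, d)" by (metis surj_pair)
  have xin: "x \<in> tape_alphabet \<Sigma>" using Cons.prems by auto
  from A Cons.prems(2) xin pd have p: "p \<in> Q" and d: "\<forall>i<k. d i \<in> {-1,0,1}"
    unfolding rtDkCA_def by (metis fst_conv snd_conv)+
  let ?c = "\<lambda>i. if i < k then c i + d i else c i"
  have st: "ca_step k \<delta> (q, c) x = (p, ?c)" by (simp add: ca_step_def pd)
  have b: "\<forall>i<k. \<bar>?c i\<bar> \<le> int (Suc n)"
  proof (intro allI impI)
    fix i assume "i < k"
    with d Cons.prems(3) show "\<bar>?c i\<bar> \<le> int (Suc n)" by fastforce
  qed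
  have z: "\<forall>i\<ge>k. ?c i = 0" using Cons.prems(4) by simp
  from Cons.prems(5) st have "foldl (ca_step k \<delta>) (p, ?c) xs = (q', c')" by simp
  from Cons.IH[OF _ p b z this] Cons.prems(1) show ?case by simp
qed

definition Sset :: "nat set \<Rightarrow> nat \<Rightarrow> nat \<Rightarrow> (nat \<times> (nat \<Rightarrow> int)) set" where
  "Sset Q k n = {(q,c). q \<in> Q \<and> (\<forall>i<k. \<bar>c i\<bar> \<le> int n) \<and> (\<forall>i\<ge>k. c i = 0)}"

lemma Sset_card:
  assumes "finite Q"
  shows "finite (Sset Q k n) \<and> card (Sset Q k n) \<le> card Q * (2*n+1)^k"
proof -
  let ?g = "\<lambda>(q, c::nat \<Rightarrow> int). (q, map c [0..<k])"
  let ?B = "Q \<times> {xs. set xs \<subseteq> {-int n..int n} \<and> length xs = k}"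
  have inj: "inj_on ?g (Sset Q k n)"
  proof (rule inj_onI)
    fix a b assume a: "a \<in> Sset Q k n" and b: "b \<in> Sset Q k n" and e: "?g a = ?g b"
    obtain q c where ac: "a = (q, c)" by (metis surj_pair)
    obtain q' c' where bc: "b = (q', c')" by (metis surj_pair)
    from e ac bc have qq: "q = q'" and m: "map c [0..<k] = map c' [0..<k]" by auto
    have "\<forall>i<k. c i = c' i"
    proof (intro allI impI)
      fix i assume "i < k"
      then have "map c [0..<k] ! i = map c' [0..<k] ! i" using m by simp
      with \<open>i < k\<close> show "c i = c' i" by simp
    qed
    moreover have "\<forall>i\<ge>k. c i = c' i" using a b ac bc by (simp add: Sset_def)
    ultimately have "c = c'" by (metis not_le ext)
    with qq ac bc show "a = b" by simp
  qed
  have sub: "?g ` Sset Q k n \<subseteq> ?B" by (force simp: Sset_def abs_le_iff)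
  have fB: "finite ?B" using assms by (simp add: finite_lists_length_eq)
  have e: "card {-int n..int n} = 2*n+1" by simp
  have cB: "card ?B = card Q * (2*n+1)^k"
    by (simp only: card_cartesian_product card_lists_length_eq[OF finite_atLeastAtMost_int] e)
  have "finite (?g ` Sset Q k n)" using sub fB finite_subset by blast
  then have fin: "finite (Sset Q k n)" using inj finite_imageD by blast
  have "card (Sset Q k n) = card (?g ` Sset Q k n)" using inj card_image by fastforce
  also have "\<dots> \<le> card ?B" using sub fB card_mono by blast
  finally show ?thesis using fin cB by simp
qed

lemma not_ca:
  assumes A: "rtDkCA k {0,1,2} Q \<delta> q0 Qa"
  shows "LL \<noteq> {w \<in> lists {0,1,2}. ca_accepts k \<delta> q0 Qa w}"
proof
  assume LE: "LL = {w \<in> lists {0,1,2}. ca_accepts k \<delta> q0 Qa w}"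
  have fQ: "finite Q" and q0: "q0 \<in> Q" using A by (auto simp: rtDkCA_def)
  obtain m where big: "card Q * (2*m+5)^k < (2::nat)^m"
    using exists_big[of "card Q" k] by blast
  define U where "U = {u::nat list. set u \<subseteq> {0,1} \<and> length u = m}"
  define f where "f u = foldl (ca_step k \<delta>) (q0, \<lambda>_. 0) (Cent # map Sym (u @ [2]))" for u
  have cU: "card U = 2^m" unfolding U_def by (simp add: card_lists_length_eq numeral_2_eq_2)
  have fS: "f ` U \<subseteq> Sset Q k (m+2)"
  proof
    fix s assume "s \<in> f ` U"
    then obtain u where u: "u \<in> U" "s = f u" by auto
    obtain q' c' where qc: "f u = (q', c')" by (metis surj_pair)
    have "set (Cent # map Sym (u @ [2])) \<subseteq> tape_alphabet {0,1,2}"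
      using u(1) by (auto simp: U_def tape_alphabet_def)
    from ca_invariant[OF A this q0 _ _ qc[unfolded f_def], of 0] u(1)
    show "s \<in> Sset Q k (m+2)" using u(2) qc by (simp add: Sset_def U_def)
  qed
  have inj: "inj_on f U"
  proof (rule inj_onI)
    fix u u' assume u: "u \<in> U" and u': "u' \<in> U" and e: "f u = f u'"
    have tp: "\<And>x. foldl (ca_step k \<delta>) (q0, \<lambda>_. 0) (tape (x @ [2] @ rev u)) =
       foldl (ca_step k \<delta>) (f x) (map Sym (rev u) @ [Dollar])"
      by (simp add: tape_def f_def)
    have "u @ [2] @ rev u \<in> LL" using u by (auto simp: LL_def U_def)
    then have "ca_accepts k \<delta> q0 Qa (u @ [2] @ rev u)" using LE by auto
    then have "ca_accepts k \<delta> q0 Qa (u' @ [2] @ rev u)"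
      unfolding ca_accepts_def tp e .
    moreover have "u' @ [2] @ rev u \<in> lists {0,1,2}" using u u' by (auto simp: U_def)
    ultimately have "u' @ [2] @ rev u \<in> {w \<in> lists {0,1,2}. ca_accepts k \<delta> q0 Qa w}" by blast
    then have "u' @ [2] @ rev u \<in> LL" by (metis LE)
    then obtain u'' where u'': "set u'' \<subseteq> {0,1}" "u' @ [2] @ rev u = u'' @ [2] @ rev u''"
      by (auto simp: LL_def)
    have n1: "2 \<notin> set u'" using u' by (auto simp: U_def)
    have n2: "2 \<notin> set u''" using u''(1) by auto
    have "u' = u'' \<and> rev u = rev u''"
      using split_first[OF n1 n2, of "rev u" "rev u''"] u''(2) by simp
    then show "u = u'" by simp
  qed
  have "2^m = card (f ` U)" using inj cU card_image by fastforce
  also have "\<dots> \<le> card (Sset Q k (m+2))"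
    using fS Sset_card[OF fQ] card_mono by blast
  also have "\<dots> \<le> card Q * (2*(m+2)+1)^k" using Sset_card[OF fQ] by blast
  finally have "2^m \<le> card Q * (2*m+5)^k" by (simp add: numeral_eq_Suc)
  then show False using big by simp
qed

theorem theorem6:
  shows "\<exists>(\<Sigma>::nat set) L. finite \<Sigma> \<and> L \<in> rtDVA_langs 2 \<Sigma> \<and>
           L \<notin> (\<Union>k\<in>{1..}. rtDkCA_langs k \<Sigma>)"
proof (intro exI conjI)
  show "finite {0::nat,1,2}" by simp
  show "LL \<in> rtDVA_langs 2 {0,1,2}" by (rule LL_in)
  show "LL \<notin> (\<Union>k\<in>{1..}. rtDkCA_langs k {0,1,2})"
    using not_ca by (auto simp: rtDkCA_langs_def)
qed

end
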